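(* Fix an integer $q_1\ge2$. For any positive real numbers $s,t$ and any integer $r\ge4$, $$\lim_{m\to\infty}\frac{a^{\operatorname{int2,r}}_m(t)}{m^s}=0,\qquad \lim_{m\to\infty}\frac{a^{\operatorname{int1,r}}_m(t)}{a^{\operatorname{int2,r}}_m(s)}=0,\qquad \lim_{m\to\infty}\frac{(\ln m)^t}{a^{\operatorname{int1,r}}_m(s)}=0.$$
   Context: $\Gamma$ denotes the Gamma function; for an integer $r\ge4$, $\Gamma_r:\mathbb{R}^+\to\mathbb{R}^+$ is $\Gamma_r(x)=[\Gamma(x^{1/r}+1)]^r$, which is increasing (hence invertible onto its image). Define $a^{\operatorname{int1,r}}_m(t)=m^{t/\Gamma_r^{-1}(\ln m/\ln q_1)}$ and $a^{\operatorname{int2,r}}_m(t)=m^{t/[\Gamma_r^{-1}(\ln m/\ln q_1)]^{(r-2)/r}}$ (for $m$ large enough that these are defined). *)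

theory Defs
  imports "HOL-Analysis.Analysis"
begin

definition Gamma_r :: "nat \<Rightarrow> real \<Rightarrow> real" where
  "Gamma_r r x = (Gamma (x powr (1 / real r) + 1)) ^ r"

text \<open>Inverse of Gamma_r (as a map on the positive reals); meaningful for y in the image
  where the preimage is unique, in particular for all sufficiently large y.\<close>
definition Gamma_r_inv :: "nat \<Rightarrow> real \<Rightarrow> real" where
  "Gamma_r_inv r y = (THE x. x > 0 \<and> Gamma_r r x = y)"

definition a_int1 :: "nat \<Rightarrow> nat \<Rightarrow> nat \<Rightarrow> real \<Rightarrow> real" where
  "a_int1 q1 r m t = real m powr (t / Gamma_r_inv r (ln (real m) / ln (real q1)))"

definition a_int2 :: "nat \<Rightarrow> nat \<Rightarrow> nat \<Rightarrow> real \<Rightarrow> real" where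
  "a_int2 q1 r m t = real m powr
     (t / (Gamma_r_inv r (ln (real m) / ln (real q1))) powr ((real r - 2) / real r))"

end

theory Submission
  imports Defs "HOL-Real_Asymp.Real_Asymp"
begin

lemma Gamma_le1:
  fixes y :: real assumes "0 < y" "y \<le> 1"
  shows "Gamma (y + 1) \<le> 1"
proof -
  have "(ln \<circ> Gamma) ((1 - y) *\<^sub>R 1 + y *\<^sub>R 2) \<le> (1 - y) * (ln \<circ> Gamma) 1 + y * (ln \<circ> Gamma) (2::real)"
    using assms by (intro convex_onD[OF log_convex_Gamma_real]) auto
  moreover have "Gamma (2::real) = 1" using Gamma_fact[of 1] by simp
  ultimately have "ln (Gamma (y + 1)) \<le> 0" by (simp add: algebra_simps)
  moreover have "Gamma (y+1) > 0" using assms by simp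
  ultimately show ?thesis by simp
qed

lemma fact_ge_pow2: "n \<ge> 1 \<Longrightarrow> (2::real) ^ (n - 1) \<le> fact n"
proof (induction n)
  case 0 then show ?case by simp
next
  case (Suc n)
  show ?case
  proof (cases "n = 0")
    case True then show ?thesis by simp
  next
    case False
    then have "(2::real) ^ (Suc n - 1) = 2 * 2 ^ (n - 1)" by (cases n) auto
    also have "\<dots> \<le> (real n + 1) * fact n"
      using Suc False by (intro mult_mono) auto
    also have "\<dots> = fact (Suc n)" by (simp add: algebra_simps)
    finally show ?thesis .
  qed
qed

lemma Gamma_exists:
  fixes c :: real assumes "c > 1"
  shows "\<exists>y. y > 1 \<and> Gamma (y + 1) = c"
proof -
  define n where "n = nat \<lceil>c\<rceil>"
  have "c \<le> real n" unfolding n_def by linarith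
  also have "real n \<le> fact n" using fact_ge_self[of n] by (metis of_nat_fact of_nat_le_iff)
  finally have c1: "c \<le> Gamma (1 + real n)" by (simp add: Gamma_fact)
  have "(1::int) < \<lceil>c\<rceil>" using assms by (simp add: less_ceiling_iff)
  then have n2: "real n \<ge> 2" unfolding n_def by simp
  have g2: "Gamma (2::real) = 1" using Gamma_fact[of 1] by simp
  have "continuous_on {2..1 + real n} Gamma"
    by (intro continuous_on_Gamma) (auto elim!: nonpos_Ints_cases)
  then obtain x where x: "x \<ge> 2" "x \<le> 1 + real n" "Gamma x = c"
    using IVT'[of Gamma 2 c "1 + real n"] c1 g2 assms n2 by auto
  have "x - 1 > 1"
  proof (rule ccontr)
    assume "\<not> x - 1 > 1"
    then have "Gamma (x - 1 + 1) \<le> 1" using x by (intro Gamma_le1) auto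
    then show False using x assms by simp
  qed
  then show ?thesis using x by (intro exI[of _ "x - 1"]) auto
qed

lemma Gamma_unique:
  fixes y z :: real assumes "y > 0" "z > 0" "Gamma (y+1) = Gamma (z+1)" "Gamma (y+1) > 1"
  shows "y = z"
proof -
  have "y > 1" using Gamma_le1[of y] assms by force
  have "z > 1" using Gamma_le1[of z] assms by force
  show ?thesis
  proof (rule ccontr)
    assume "y \<noteq> z"
    then consider "y < z" | "z < y" by linarith
    then show False
      using Gamma_real_strict_mono[of "y+1" "z+1"] Gamma_real_strict_mono[of "z+1" "y+1"]
        \<open>y > 1\<close> \<open>z > 1\<close> assms(3) by cases auto
  qed
qed

definition Yf :: "nat \<Rightarrow> real \<Rightarrow> real" where
  "Yf r L = (THE y. y > 0 \<and> Gamma (y + 1) = L powr (1 / real r))"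

lemma Yf_props:
  assumes "L > 1" "r > 0"
  shows "Yf r L > 1" "Gamma (Yf r L + 1) = L powr (1 / real r)" "Gamma_r_inv r L = Yf r L ^ r"
proof -
  define c where "c = L powr (1 / real r)"
  have "1 powr (1 / real r) < L powr (1 / real r)"
    by (rule powr_less_mono2) (use assms in auto)
  then have c1: "c > 1" unfolding c_def by simp
  obtain y where y: "y > 1" "Gamma (y + 1) = c" using Gamma_exists[OF c1] by blast
  have Y: "Yf r L = y" unfolding Yf_def c_def[symmetric]
    by (rule the_equality) (use y c1 Gamma_unique in auto)
  show "Yf r L > 1" "Gamma (Yf r L + 1) = L powr (1 / real r)" using Y y c_def by auto
  have "(THE x. x > 0 \<and> Gamma_r r x = L) = y ^ r"
  proof (rule the_equality)
    have "(y ^ r) powr (1 / real r) = y" using y assms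
      by (simp add: powr_realpow[symmetric] powr_powr)
    then show "y ^ r > 0 \<and> Gamma_r r (y ^ r) = L"
      using y assms unfolding Gamma_r_def c_def
      by (simp add: powr_realpow[symmetric] powr_powr)
  next
    fix x assume x: "x > 0 \<and> Gamma_r r x = L"
    define z where "z = x powr (1 / real r)"
    have z0: "z > 0" using x unfolding z_def by simp
    have gz: "Gamma (z + 1) ^ r = L" using x unfolding Gamma_r_def z_def by simp
    have "Gamma (z + 1) = (Gamma (z + 1) ^ r) powr (1 / real r)"
      using z0 assms by (simp add: powr_realpow[symmetric] powr_powr)
    then have "Gamma (z + 1) = c" using gz c_def by simp
    then have "z = y" using Gamma_unique[of z y] z0 y c1 by auto
    have "y ^ r = (x powr (1 / real r)) powr real r" using \<open>z = y\<close> z_def y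
      by (simp add: powr_realpow)
    also have "\<dots> = x" using x assms by (simp add: powr_powr)
    finally show "x = y ^ r" by simp
  qed
  then show "Gamma_r_inv r L = Yf r L ^ r" unfolding Gamma_r_inv_def Y .
qed

lemma Yf_large:
  assumes "r > 0" "L > 1" "L > (fact n) ^ r"
  shows "Yf r L > real n"
proof (rule ccontr)
  assume "\<not> Yf r L > real n"
  then have le: "Yf r L \<le> real n" by simp
  have Y1: "Yf r L > 1" using Yf_props assms by blast
  have "Gamma (Yf r L + 1) \<le> Gamma (real n + 1)"
  proof (cases "Yf r L < real n")
    case True then show ?thesis using Gamma_real_strict_mono[of "Yf r L + 1" "real n + 1"] Y1 by auto
  next
    case False then show ?thesis using le by auto
  qed
  also have "\<dots> = fact n" using Gamma_fact[of n] by (simp add: add.commute)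
  finally have h: "L powr (1 / real r) \<le> fact n" using Yf_props(2)[OF assms(2,1)] by simp
  have "L = (L powr (1 / real r)) ^ r" using assms
    by (simp add: powr_realpow[symmetric] powr_powr)
  also have "\<dots> \<le> (fact n) ^ r" by (rule power_mono[OF h]) simp
  finally show False using assms by simp
qed

lemma Yf_at_top:
  assumes "r > 0"
  shows "filterlim (Yf r) at_top at_top"
  unfolding filterlim_at_top
proof
  fix Z :: real
  define n where "n = nat \<lceil>Z\<rceil>"
  have "\<forall>L\<ge>max 2 ((fact n) ^ r + 1). Z \<le> Yf r L"
  proof (intro allI impI)
    fix L :: real assume "L \<ge> max 2 ((fact n) ^ r + 1)"
    then have h: "(fact n) ^ r + 1 \<le> L" by auto
    have "(1::real) \<le> (fact n) ^ r" by (intro one_le_power) simp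
    then have "L > 1" "L > (fact n) ^ r" using h by linarith+
    then have "Yf r L > real n" using Yf_large[OF assms, of L n] by blast
    moreover have "Z \<le> real n" unfolding n_def by linarith
    ultimately show "Z \<le> Yf r L" by simp
  qed
  then show "eventually (\<lambda>L. Z \<le> Yf r L) at_top"
    unfolding eventually_at_top_linorder by blast
qed

lemma Yf_upper:
  assumes "r > 0" "L > 1"
  shows "Yf r L \<le> 2 + ln L / (real r * ln 2)"
proof -
  define Y where "Y = Yf r L"
  have Y1: "Y > 1" using Yf_props assms Y_def by blast
  define n where "n = nat \<lfloor>Y\<rfloor>"
  have n1: "n \<ge> 1" unfolding n_def using Y1 by linarith
  have nY: "real n \<le> Y" "Y < real n + 1" unfolding n_def using Y1 by linarith+
  have "(2::real) ^ (n - 1) \<le> fact n" by (rule fact_ge_pow2[OF n1])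
  also have "\<dots> = Gamma (real n + 1)" by (metis Gamma_fact add.commute)
  also have "\<dots> \<le> Gamma (Y + 1)"
  proof (cases "real n < Y")
    case True then show ?thesis using Gamma_real_strict_mono[of "real n + 1" "Y + 1"] n1 by auto
  next
    case False then show ?thesis using nY by auto
  qed
  also have "\<dots> = L powr (1 / real r)" using Yf_props(2)[OF assms(2,1)] Y_def by simp
  finally have h: "(2::real) ^ (n - 1) \<le> L powr (1 / real r)" .
  have "ln ((2::real) ^ (n - 1)) \<le> ln (L powr (1 / real r))"
    using h assms by (subst ln_le_cancel_iff) auto
  then have "(real n - 1) * ln 2 \<le> ln L / real r"
    using assms n1 by (simp add: ln_realpow ln_powr of_nat_diff)
  moreover have "(Y - 2) * ln 2 \<le> (real n - 1) * ln 2" using nY by (intro mult_right_mono) auto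
  ultimately have "(Y - 2) * ln 2 \<le> ln L / real r" by linarith
  then have "real r * ((Y - 2) * ln 2) \<le> real r * (ln L / real r)"
    by (intro mult_left_mono) auto
  also have "\<dots> = ln L" using assms by simp
  finally have "(Y - 2) * (real r * ln 2) \<le> ln L" by (simp add: algebra_simps)
  then have "Y - 2 \<le> ln L / (real r * ln 2)" using assms by (simp add: pos_le_divide_eq)
  then show ?thesis unfolding Y_def by simp
qed

lemma filterlim_at_bot_mono':
  "filterlim g at_bot F \<Longrightarrow> eventually (\<lambda>x. f x \<le> (g x::real)) F \<Longrightarrow> filterlim f at_bot F"
  by (auto simp: filterlim_at_bot elim: eventually_elim2 intro: order_trans)

lemma RA1: "lq > 0 \<Longrightarrow> (r::nat) > 0 \<Longrightarrow>
  filterlim (\<lambda>L::real. lq * L / (2 + ln L / (real r * ln 2)) ^ r) at_top at_top"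
  by real_asymp

lemma RA2: "lq > 0 \<Longrightarrow> (r::nat) > 0 \<Longrightarrow> t > 0 \<Longrightarrow> s > 0 \<Longrightarrow>
  filterlim (\<lambda>L::real. t * ln (lq * L) - s * (lq * L / (2 + ln L / (real r * ln 2)) ^ r)) at_bot at_top"
  by real_asymp

lemma RA3: "lq > 0 \<Longrightarrow> filterlim (\<lambda>m::nat. ln (real m) / lq) at_top sequentially"
  by real_asymp

lemma RA4: "filterlim (\<lambda>m::nat. ln (real m)) at_top sequentially"
  by real_asymp

theorem mainTheorem12:
  fixes q1 r :: nat and s t :: real
  assumes "q1 \<ge> 2" and "s > 0" and "t > 0" and "r \<ge> 4"
  shows "((\<lambda>m. a_int2 q1 r m t / real m powr s) \<longlongrightarrow> 0) sequentially \<and>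
         ((\<lambda>m. a_int1 q1 r m t / a_int2 q1 r m s) \<longlongrightarrow> 0) sequentially \<and>
         ((\<lambda>m. ln (real m) powr t / a_int1 q1 r m s) \<longlongrightarrow> 0) sequentially"
proof -
  define lq where "lq = ln (real q1)"
  have lq: "lq > 0" unfolding lq_def using assms by simp
  have r0: "r > 0" using assms by simp
  define Lm where "Lm m = ln (real m) / lq" for m :: nat
  define Ym where "Ym m = Yf r (Lm m)" for m
  define gf where "gf L = 2 + ln L / (real r * ln 2)" for L :: real
  have hL: "filterlim Lm at_top sequentially" unfolding Lm_def using RA3[OF lq] .
  have hY: "filterlim Ym at_top sequentially" unfolding Ym_def
    by (rule filterlim_compose[OF Yf_at_top[OF r0] hL])
  have ev: "eventually (\<lambda>m. m > q1) sequentially" by (rule eventually_gt_at_top)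
  have facts: "Lm m > 1 \<and> Ym m > 1 \<and> Gamma_r_inv r (Lm m) = Ym m ^ r \<and> ln (real m) = lq * Lm m
     \<and> ln (real m) > 0 \<and> real m > 0 \<and> Ym m \<le> gf (Lm m)" if m: "m > q1" for m
  proof -
    have "ln (real q1) < ln (real m)" using m assms by simp
    then have L1: "Lm m > 1" unfolding Lm_def using lq lq_def by simp
    moreover have "ln (real m) > 0" using m assms by simp
    ultimately show ?thesis using Yf_props[OF L1 r0] Yf_upper[OF r0 L1] lq m
      unfolding Ym_def gf_def Lm_def by auto
  qed
  have pw: "(Y ^ r) powr ((real r - 2) / real r) = Y ^ (r - 2)" if "Y > 0" for Y :: real
  proof -
    have "(Y ^ r) powr ((real r - 2) / real r) = Y powr (real r * ((real r - 2) / real r))"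
      using that by (simp add: powr_realpow[symmetric] powr_powr)
    also have "\<dots> = Y powr real (r - 2)" using assms by (simp add: of_nat_diff)
    also have "\<dots> = Y ^ (r - 2)" using that by (simp add: powr_realpow)
    finally show ?thesis .
  qed
  have r2: "r = (r - 2) + 2" using assms by simp
  have rsplit: "Y ^ r = Y ^ (r - 2) * Y ^ 2" for Y :: real
    by (subst r2) (simp only: power_add diff_add_inverse2)
  have bnd: "lq * Lm m / gf (Lm m) ^ r \<le> ln (real m) / Ym m ^ r" if m: "m > q1" for m
  proof -
    note f = facts[OF m]
    have "Ym m ^ r \<le> gf (Lm m) ^ r" using f by (intro power_mono) auto
    moreover have "0 < gf (Lm m) ^ r * Ym m ^ r" using f by auto
    ultimately have "ln (real m) / gf (Lm m) ^ r \<le> ln (real m) / Ym m ^ r"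
      using f by (intro divide_left_mono) auto
    then show ?thesis using f by simp
  qed
  have lnm: "filterlim (\<lambda>m::nat. ln (real m)) at_top sequentially" by (rule RA4)
  have B: "filterlim (\<lambda>m. ln (real m) / Ym m ^ r) at_top sequentially"
  proof (rule filterlim_at_top_mono)
    show "filterlim (\<lambda>m. lq * Lm m / gf (Lm m) ^ r) at_top sequentially"
      unfolding gf_def by (rule filterlim_compose[OF RA1[OF lq r0] hL])
    show "eventually (\<lambda>m. lq * Lm m / gf (Lm m) ^ r \<le> ln (real m) / Ym m ^ r) sequentially"
      using ev
    proof eventually_elim
      case (elim m)
      show ?case by (rule bnd[OF elim])
    qed
  qed
  have part1: "((\<lambda>m. a_int2 q1 r m t / real m powr s) \<longlongrightarrow> 0) sequentially"
  proof -
    have eq: "eventually (\<lambda>m. exp ((t / Ym m ^ (r - 2) - s) * ln (real m)) =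
        a_int2 q1 r m t / real m powr s) sequentially"
      using ev
    proof eventually_elim
      case (elim m)
      note f = facts[OF elim]
      have "a_int2 q1 r m t = real m powr (t / Ym m ^ (r - 2))"
        unfolding a_int2_def using f pw[of "Ym m"] by (simp add: Lm_def lq_def)
      then show ?case using f by (simp add: powr_def exp_diff algebra_simps)
    qed
    have lim0: "((\<lambda>m. t / Ym m ^ (r - 2) - s) \<longlongrightarrow> 0 - s) sequentially"
      using assms
      by (intro tendsto_diff real_tendsto_divide_at_top[OF tendsto_const]
          filterlim_pow_at_top[OF _ hY] tendsto_const) auto
    have "filterlim (\<lambda>m. (t / Ym m ^ (r - 2) - s) * ln (real m)) at_bot sequentially"
      by (rule filterlim_tendsto_neg_mult_at_bot[OF lim0 _ lnm]) (use assms in auto)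
    from filterlim_compose[OF exp_at_bot this] show ?thesis
      using tendsto_cong[OF eq] by simp
  qed
  have part2: "((\<lambda>m. a_int1 q1 r m t / a_int2 q1 r m s) \<longlongrightarrow> 0) sequentially"
  proof -
    have eq: "eventually (\<lambda>m. exp (- ((- t + s * Ym m ^ 2) * (ln (real m) / Ym m ^ r))) =
        a_int1 q1 r m t / a_int2 q1 r m s) sequentially"
      using ev
    proof eventually_elim
      case (elim m)
      note f = facts[OF elim]
      have e2: "a_int2 q1 r m s = real m powr (s / Ym m ^ (r - 2))"
        unfolding a_int2_def using f pw[of "Ym m"] by (simp add: Lm_def lq_def)
      have e1: "a_int1 q1 r m t = real m powr (t / Ym m ^ r)"
        unfolding a_int1_def using f by (simp add: Lm_def lq_def)
      have m0: "real m > 0" using f by simp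
      have "t / Ym m ^ r - s / Ym m ^ (r - 2) = - ((- t + s * Ym m ^ 2) / Ym m ^ r)"
        using f rsplit[of "Ym m"] by (simp add: field_simps)
      have "a_int1 q1 r m t / a_int2 q1 r m s
          = exp ((t / Ym m ^ r - s / Ym m ^ (r - 2)) * ln (real m))"
        unfolding e1 e2 using m0 by (simp add: powr_def exp_diff[symmetric] left_diff_distrib)
      also have "(t / Ym m ^ r - s / Ym m ^ (r - 2)) * ln (real m)
          = - ((- t + s * Ym m ^ 2) * (ln (real m) / Ym m ^ r))"
        using \<open>t / Ym m ^ r - s / Ym m ^ (r - 2) = _\<close> by simp
      finally show ?case by simp
    qed
    have A: "filterlim (\<lambda>m. - t + s * Ym m ^ 2) at_top sequentially"
      by (intro filterlim_tendsto_add_at_top[OF tendsto_const]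
          filterlim_tendsto_pos_mult_at_top[OF tendsto_const] filterlim_pow_at_top[OF _ hY])
         (use assms in auto)
    have "filterlim (\<lambda>m. - ((- t + s * Ym m ^ 2) * (ln (real m) / Ym m ^ r))) at_bot sequentially"
      using filterlim_at_top_mult_at_top[OF A B] unfolding filterlim_uminus_at_top .
    from filterlim_compose[OF exp_at_bot this] show ?thesis
      using tendsto_cong[OF eq] by simp
  qed
  have part3: "((\<lambda>m. ln (real m) powr t / a_int1 q1 r m s) \<longlongrightarrow> 0) sequentially"
  proof -
    have eq: "eventually (\<lambda>m. exp (t * ln (ln (real m)) - s * (ln (real m) / Ym m ^ r)) =
        ln (real m) powr t / a_int1 q1 r m s) sequentially"
      using ev
    proof eventually_elim
      case (elim m)
      note f = facts[OF elim]
      have "a_int1 q1 r m s = real m powr (s / Ym m ^ r)"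
        unfolding a_int1_def using f by (simp add: Lm_def lq_def)
      then show ?case using f lq
        by (simp add: powr_def exp_diff algebra_simps)
    qed
    have "filterlim (\<lambda>m. t * ln (ln (real m)) - s * (ln (real m) / Ym m ^ r)) at_bot sequentially"
    proof (rule filterlim_at_bot_mono')
      show "filterlim (\<lambda>m. t * ln (lq * Lm m) - s * (lq * Lm m / gf (Lm m) ^ r)) at_bot sequentially"
        unfolding gf_def by (rule filterlim_compose[OF RA2[OF lq r0 assms(3) assms(2)] hL])
      show "eventually (\<lambda>m. t * ln (ln (real m)) - s * (ln (real m) / Ym m ^ r) \<le>
          t * ln (lq * Lm m) - s * (lq * Lm m / gf (Lm m) ^ r)) sequentially"
        using ev
      proof eventually_elim
        case (elim m)
        note f = facts[OF elim]
        have "lq * Lm m / gf (Lm m) ^ r \<le> ln (real m) / Ym m ^ r" by (rule bnd[OF elim])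
        then have "s * (lq * Lm m / gf (Lm m) ^ r) \<le> s * (ln (real m) / Ym m ^ r)"
          using assms by (intro mult_left_mono) auto
        moreover have "t * ln (ln (real m)) = t * ln (lq * Lm m)" using f by simp
        ultimately show ?case by linarith
      qed
    qed
    from filterlim_compose[OF exp_at_bot this] show ?thesis
      using tendsto_cong[OF eq] by simp
  qed
  show ?thesis using part1 part2 part3 by blast
qed

end
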